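(* Let $R$ be an $n$-torsion clean ring (respectively, a strongly $n$-torsion clean ring). Then there exist finitely many elements $r_1,\ldots,r_k\in R$ with clean (respectively, strongly clean) decompositions $r_i=e_i+u_i$, $1\leq i\leq k$, such that $n=\mathrm{LCM}(o(u_1),\ldots,o(u_k))$. In particular: (1) if the unit group $U(R)$ has finite exponent $s$, then $n$ divides $s$; (2) if $R$ is commutative, then $U(R)$ contains an element of order $n$.
   Context: All rings are associative with identity. $o(u)$ denotes the order of a unit $u$ in $U(R)$. A clean decomposition of $r$ is $r=e+u$ with $e$ idempotent and $u$ a unit; it is strongly clean if also $eu=ue$. A ring $R$ is (strongly) $n$-torsion clean if every $r\in R$ can be written $r=e+u$ with $e^2=e$, $u\in U(R)$, $u^n=1$ (and $eu=ue$ in the strong case), and $n$ is the smallest natural number with this property. *)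

theory Defs
  imports Main
begin

definition is_unit_r :: "'a::ring_1 \<Rightarrow> bool" where
  "is_unit_r u \<longleftrightarrow> (\<exists>v. u * v = 1 \<and> v * u = 1)"

definition idem :: "'a::ring_1 \<Rightarrow> bool" where
  "idem e \<longleftrightarrow> e * e = e"

text \<open>Order of a unit; 0 encodes infinite order.\<close>
definition uord :: "'a::ring_1 \<Rightarrow> nat" where
  "uord u = (if \<exists>m>0. u ^ m = 1 then (LEAST m. m > 0 \<and> u ^ m = 1) else 0)"

definition tc_prop :: "bool \<Rightarrow> nat \<Rightarrow> 'a::ring_1 itself \<Rightarrow> bool" where
  "tc_prop strong n R \<longleftrightarrow>
     (\<forall>r::'a. \<exists>e u. idem e \<and> is_unit_r u \<and> u ^ n = 1 \<and> r = e + u \<and> (strong \<longrightarrow> e * u = u * e))"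

definition n_torsion_clean :: "nat \<Rightarrow> 'a::ring_1 itself \<Rightarrow> bool" where
  "n_torsion_clean n R \<longleftrightarrow> n > 0 \<and> tc_prop False n R \<and> (\<forall>m. 0 < m \<and> m < n \<longrightarrow> \<not> tc_prop False m R)"

definition strongly_n_torsion_clean :: "nat \<Rightarrow> 'a::ring_1 itself \<Rightarrow> bool" where
  "strongly_n_torsion_clean n R \<longleftrightarrow> n > 0 \<and> tc_prop True n R \<and> (\<forall>m. 0 < m \<and> m < n \<longrightarrow> \<not> tc_prop True m R)"

definition units_exponent :: "'a::ring_1 itself \<Rightarrow> nat \<Rightarrow> bool" where
  "units_exponent R s \<longleftrightarrow> s > 0 \<and> (\<forall>u::'a. is_unit_r u \<longrightarrow> u ^ s = 1) \<and>
     (\<forall>t. t > 0 \<and> (\<forall>u::'a. is_unit_r u \<longrightarrow> u ^ t = 1) \<longrightarrow> s \<le> t)"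

end

theory Submission imports Defs "HOL-Computational_Algebra.Primes" begin

lemma uord_pos_iff: "uord (u::'a::ring_1) > 0 \<longleftrightarrow> (\<exists>m>0. u ^ m = 1)"
proof
  assume "uord u > 0" thus "\<exists>m>0. u ^ m = 1"
    by (metis (no_types, lifting) uord_def less_irrefl)
next
  assume h: "\<exists>m>0. u ^ m = 1"
  hence "uord u = (LEAST m. m > 0 \<and> u ^ m = 1)" by (simp add: uord_def)
  thus "uord u > 0" using LeastI_ex[OF h] by simp
qed

lemma uord_pow: assumes "uord (u::'a::ring_1) > 0" shows "u ^ uord u = 1"
proof -
  have h: "\<exists>m>0. u ^ m = 1" using assms uord_pos_iff by blast
  hence "uord u = (LEAST m. m > 0 \<and> u ^ m = 1)" by (simp add: uord_def)
  thus ?thesis using LeastI_ex[OF h] by simp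
qed

lemma uord_dvd_iff: assumes "uord (u::'a::ring_1) > 0" shows "u ^ k = 1 \<longleftrightarrow> uord u dvd k"
proof
  assume "uord u dvd k"
  then obtain q where "k = uord u * q" by blast
  thus "u ^ k = 1" by (simp add: power_mult uord_pow[OF assms])
next
  assume k: "u ^ k = 1"
  define d where "d = uord u"
  have h: "\<exists>m>0. u ^ m = 1" using assms uord_pos_iff by blast
  hence dl: "d = (LEAST m. m > 0 \<and> u ^ m = 1)" by (simp add: uord_def d_def)
  have "k = d * (k div d) + k mod d" by simp
  hence "u ^ k = (u ^ d) ^ (k div d) * u ^ (k mod d)" by (metis power_add power_mult)
  hence r: "u ^ (k mod d) = 1" using k uord_pow[OF assms] d_def by simp
  have "k mod d < d" using assms d_def by simp
  hence "\<not> (k mod d > 0 \<and> u ^ (k mod d) = 1)" using not_less_Least dl by blast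
  hence "k mod d = 0" using r by simp
  thus "uord u dvd k" using d_def by auto
qed

lemma uord_eqI: assumes "b > 0" "\<And>k. (x::'a::ring_1) ^ k = 1 \<longleftrightarrow> b dvd k" shows "uord x = b"
proof -
  have "x ^ b = 1" using assms by simp
  hence p: "uord x > 0" using assms(1) uord_pos_iff by blast
  have "uord x dvd b" using uord_dvd_iff[OF p] \<open>x ^ b = 1\<close> by simp
  moreover have "b dvd uord x" using assms(2) uord_pow[OF p] by simp
  ultimately show ?thesis by (simp add: dvd_antisym)
qed

lemma unit_of_pow: assumes "m > 0" "(u::'a::ring_1) ^ m = 1" shows "is_unit_r u"
proof -
  obtain k where "m = Suc k" using assms by (cases m) auto
  thus ?thesis using assms unfolding is_unit_r_def
    by (metis power_Suc power_Suc2)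
qed

lemma uord_power: assumes "uord (x::'a::ring_1) = a * b" "a * b > 0" shows "uord (x ^ a) = b"
proof (rule uord_eqI)
  show "b > 0" using assms by simp
  fix k
  have p: "uord x > 0" using assms by simp
  have "(x ^ a) ^ k = x ^ (a * k)" by (simp add: power_mult)
  hence "(x ^ a) ^ k = 1 \<longleftrightarrow> a * b dvd a * k" using uord_dvd_iff[OF p] assms(1)
    by simp
  also have "\<dots> \<longleftrightarrow> b dvd k" using assms by simp
  finally show "(x ^ a) ^ k = 1 \<longleftrightarrow> b dvd k" .
qed

lemma pow_mult_comm: assumes "\<forall>a b::'a::ring_1. a * b = b * a" shows "(x * y) ^ k = x ^ k * (y::'a) ^ k"
proof (induction k)
  case (Suc k)
  then show ?case by (simp add: assms mult.assoc) (metis assms mult.assoc)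
qed simp

lemma uord_coprime:
  assumes comm: "\<forall>a b::'a::ring_1. a * b = b * a"
    and ax: "uord (x::'a) = a" "a > 0" and hy: "uord y = b" "b > 0" and cp: "coprime a b"
  shows "uord (x * y) = a * b"
proof (rule uord_eqI)
  show "a * b > 0" using ax hy by simp
  fix k
  have px: "uord x > 0" and py: "uord y > 0" using ax hy by auto
  show "(x * y) ^ k = 1 \<longleftrightarrow> a * b dvd k"
  proof
    assume "a * b dvd k"
    hence "a dvd k" "b dvd k" by (auto intro: dvd_mult_left dvd_mult_right)
    hence "x ^ k = 1" "y ^ k = 1" using uord_dvd_iff[OF px] uord_dvd_iff[OF py] ax hy by auto
    thus "(x * y) ^ k = 1" by (simp add: pow_mult_comm[OF comm])
  next
    assume h: "(x * y) ^ k = 1"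
    have "(x ^ k * y ^ k) ^ a = 1" using h by (simp add: pow_mult_comm[OF comm])
    hence "x ^ (k * a) * y ^ (k * a) = 1" by (simp add: pow_mult_comm[OF comm] power_mult)
    moreover have "x ^ (k * a) = 1" using uord_dvd_iff[OF px] ax by simp
    ultimately have "y ^ (k * a) = 1" by simp
    hence "b dvd k * a" using uord_dvd_iff[OF py] hy by simp
    hence bk: "b dvd k" using cp by (metis coprime_commute coprime_dvd_mult_left_iff)
    have "(x ^ k * y ^ k) ^ b = 1" using h by (simp add: pow_mult_comm[OF comm])
    hence "x ^ (k * b) * y ^ (k * b) = 1" by (simp add: pow_mult_comm[OF comm] power_mult)
    moreover have "y ^ (k * b) = 1" using uord_dvd_iff[OF py] hy by simp
    ultimately have "x ^ (k * b) = 1" by simp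
    hence "a dvd k * b" using uord_dvd_iff[OF px] ax by simp
    hence "a dvd k" using cp by (metis coprime_dvd_mult_left_iff)
    thus "a * b dvd k" using bk cp by (simp add: divides_mult)
  qed
qed


lemma lcm_reduce:
  fixes a b p :: nat
  assumes p: "prime p" and pa: "p dvd a" and pb: "p dvd b" and a0: "a > 0" and b0: "b > 0"
  shows "lcm (a div p) b = lcm a b \<or> lcm a (b div p) = lcm a b"
proof (rule ccontr)
  assume nc: "\<not> ?thesis"
  define L where "L = lcm a b"
  define M1 where "M1 = lcm (a div p) b"
  define M2 where "M2 = lcm a (b div p)"
  have p1: "p > 1" using p prime_gt_1_nat by blast
  have L0: "L > 0" using a0 b0 L_def by (simp add: lcm_pos_nat)
  have "a div p dvd a" using pa by (metis dvd_div_mult_self dvd_triv_left)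
  hence M1L: "M1 dvd L" unfolding M1_def L_def
    by (meson dvd_lcm1 dvd_lcm2 dvd_trans lcm_least)
  have "b div p dvd b" using pb by (metis dvd_div_mult_self dvd_triv_left)
  hence M2L: "M2 dvd L" unfolding M2_def L_def
    by (meson dvd_lcm1 dvd_lcm2 dvd_trans lcm_least)
  have LM1: "L dvd p * M1" unfolding L_def M1_def
  proof (rule lcm_least)
    show "a dvd p * lcm (a div p) b" using pa
      by (metis dvd_lcm1 dvd_mult_div_cancel mult_dvd_mono dvd_refl)
    show "b dvd p * lcm (a div p) b" by (simp add: dvd_mult)
  qed
  have LM2: "L dvd p * M2" unfolding L_def M2_def
  proof (rule lcm_least)
    show "b dvd p * lcm a (b div p)" using pb
      by (metis dvd_lcm2 dvd_mult_div_cancel mult_dvd_mono dvd_refl)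
    show "a dvd p * lcm a (b div p)" by (simp add: dvd_mult)
  qed
  have key: "\<And>M. M dvd L \<Longrightarrow> L dvd p * M \<Longrightarrow> M \<noteq> L \<Longrightarrow> L = p * M"
  proof -
    fix M assume h: "M dvd L" "L dvd p * M" "M \<noteq> L"
    obtain t where t: "L = M * t" using h(1) by blast
    have M0: "M > 0" using t L0 by (cases M) auto
    have "M * t dvd M * p" using h(2) t by (simp add: mult.commute)
    hence "t dvd p" using M0 by simp
    hence "t = 1 \<or> t = p" using p by (simp add: prime_nat_iff)
    thus "L = p * M" using t h(3) by auto
  qed
  have e1: "L = p * M1" using key[OF M1L LM1] nc M1_def L_def by auto
  have e2: "L = p * M2" using key[OF M2L LM2] nc M2_def L_def by auto
  have "M1 = M2" using e1 e2 p1 by simp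
  have "a dvd M2" unfolding M2_def by simp
  moreover have "b dvd M2" using \<open>M1 = M2\<close> unfolding M1_def by (metis dvd_lcm2)
  ultimately have "L dvd M2" unfolding L_def by (rule lcm_least)
  hence "L \<le> M2" using e2 L0 by (simp add: dvd_imp_le)
  thus False using e2 p1 L0 by simp
qed

lemma uord_lcm:
  assumes comm: "\<forall>a b::'a::ring_1. a * b = b * a"
  shows "\<forall>a b (x::'a) (y::'a). a + b = N \<longrightarrow> uord x = a \<longrightarrow> uord y = b \<longrightarrow> a > 0 \<longrightarrow> b > 0
           \<longrightarrow> (\<exists>z::'a. uord z = lcm a b)"
proof (induction N rule: less_induct)
  case (less N)
  show ?case
  proof (intro allI impI)
    fix a b and x y :: 'a
    assume h: "a + b = N" "uord x = a" "uord y = b" "a > 0" "b > 0"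
    show "\<exists>z::'a. uord z = lcm a b"
    proof (cases "coprime a b")
      case True
      hence "uord (x * y) = a * b" using uord_coprime[OF comm] h by blast
      moreover have "lcm a b = a * b" using True by (simp add: lcm_coprime)
      ultimately show ?thesis by auto
    next
      case False
      hence "gcd a b \<noteq> 1" by (simp add: coprime_iff_gcd_eq_1)
      then obtain p where p: "prime p" "p dvd gcd a b" using prime_factor_nat by blast
      hence pa: "p dvd a" and pb: "p dvd b" by auto
      have p1: "p > 1" using p prime_gt_1_nat by blast
      from lcm_reduce[OF p(1) pa pb h(4) h(5)]
      show ?thesis
      proof
        assume e: "lcm (a div p) b = lcm a b"
        have a': "a = p * (a div p)" using pa by simp
        have ap: "a div p > 0" using pa h(4) by (metis a' gr0I mult_0_right)
        have xp: "uord (x ^ p) = a div p" using uord_power[of x p "a div p"] h(2) a' h(4) by simp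
        have lt: "a div p + b < N" using h(1) div_less_dividend[OF p1 h(4)] by simp
        obtain z :: 'a where "uord z = lcm (a div p) b"
          using less[OF lt, rule_format, of "a div p" b "x ^ p" y, OF refl xp h(3) ap h(5)] by blast
        thus ?thesis using e by auto
      next
        assume e: "lcm a (b div p) = lcm a b"
        have b': "b = p * (b div p)" using pb by simp
        have bp: "b div p > 0" using pb h(5) by (metis b' gr0I mult_0_right)
        have yp: "uord (y ^ p) = b div p" using uord_power[of y p "b div p"] h(3) b' h(5) by simp
        have lt: "a + b div p < N" using h(1) div_less_dividend[OF p1 h(5)] by simp
        obtain z :: 'a where "uord z = lcm a (b div p)"
          using less[OF lt, rule_format, of a "b div p" x "y ^ p", OF refl h(2) yp h(4) bp] by blast
        thus ?thesis using e by auto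
      qed
    qed
  qed
qed

lemma uord_one: "uord (1::'a::ring_1) = 1"
  by (rule uord_eqI) auto

lemma uord_Lcm:
  assumes comm: "\<forall>a b::'a::ring_1. a * b = b * a"
  shows "finite F \<Longrightarrow> (\<forall>d\<in>F. d > 0 \<and> (\<exists>x::'a. uord x = d)) \<Longrightarrow> \<exists>z::'a. uord z = Lcm F"
proof (induction F rule: finite_induct)
  case empty
  then show ?case using uord_one by (metis Lcm_empty)
next
  case (insert d F)
  then obtain z :: 'a where z: "uord z = Lcm F" by auto
  obtain x :: 'a where x: "uord x = d" and d0: "d > 0" using insert by auto
  have "Lcm F \<noteq> 0" using insert by (subst Lcm_0_iff_nat) fastforce+
  hence "\<exists>w::'a. uord w = lcm d (Lcm F)"
    using uord_lcm[OF comm, rule_format, OF refl x z] d0 by auto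
  thus ?case by simp
qed


lemma gen_lcm:
  assumes n0: "n > 0" and tc: "tc_prop s n TYPE('a::ring_1)"
    and mn: "\<forall>m. 0 < m \<and> m < n \<longrightarrow> \<not> tc_prop s m TYPE('a)"
  defines "T \<equiv> {(r, e, u::'a). r = e + u \<and> idem e \<and> is_unit_r u \<and> u ^ n = 1 \<and> (s \<longrightarrow> e * u = u * e)}"
  shows "finite ((\<lambda>(r, e, u). uord u) ` T)" and "Lcm ((\<lambda>(r, e, u). uord u) ` T) = n"
    and "\<forall>d\<in>(\<lambda>(r, e, u). uord u) ` T. d > 0"
proof -
  let ?O = "(\<lambda>(r, e, u). uord u) ` T"
  have sub: "\<forall>d\<in>?O. d > 0 \<and> d dvd n"
  proof
    fix d assume "d \<in> ?O"
    then obtain r e u where t: "(r, e, u) \<in> T" and d: "d = uord u" by auto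
    have "u ^ n = 1" using t T_def by auto
    hence p: "uord u > 0" using n0 uord_pos_iff by blast
    thus "d > 0 \<and> d dvd n" using uord_dvd_iff[OF p] \<open>u ^ n = 1\<close> d by auto
  qed
  thus "\<forall>d\<in>?O. d > 0" by blast
  have "?O \<subseteq> {d. d dvd n}" using sub by auto
  thus fin: "finite ?O" using finite_divisors_nat[OF n0] finite_subset by blast
  define L where "L = Lcm ?O"
  have Ln: "L dvd n" unfolding L_def using sub by (auto intro: Lcm_least)
  hence L0: "L > 0" using n0 by (cases L) auto
  have "tc_prop s L TYPE('a)"
    unfolding tc_prop_def
  proof
    fix r :: 'a
    obtain e u where h: "idem e" "is_unit_r u" "u ^ n = 1" "r = e + u" "s \<longrightarrow> e * u = u * e"
      using tc unfolding tc_prop_def by blast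
    have "(r, e, u) \<in> T" using h T_def by auto
    hence "uord u \<in> ?O" by force
    hence dv: "uord u dvd L" unfolding L_def by (rule dvd_Lcm)
    have p: "uord u > 0" using h(3) n0 uord_pos_iff by blast
    have "u ^ L = 1" using uord_dvd_iff[OF p] dv by simp
    thus "\<exists>e u. idem e \<and> is_unit_r u \<and> u ^ L = 1 \<and> r = e + u \<and> (s \<longrightarrow> e * u = u * e)"
      using h by blast
  qed
  hence "\<not> L < n" using mn L0 by blast
  moreover have "L \<le> n" using Ln n0 by (simp add: dvd_imp_le)
  ultimately show "Lcm ?O = n" unfolding L_def by simp
qed

lemma list_of_image:
  assumes "finite (f ` T)"
  shows "\<exists>ds. set ds \<subseteq> T \<and> f ` set ds = f ` T"
proof -
  obtain C where "C \<subseteq> T" "finite C" "f ` T = f ` C"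
    using finite_subset_image[OF assms subset_refl] by blast
  moreover obtain ds where "set ds = C" using \<open>finite C\<close> finite_list by blast
  ultimately show ?thesis by auto
qed

lemma gen_list:
  assumes n0: "n > 0" and tc: "tc_prop s n TYPE('a::ring_1)"
    and mn: "\<forall>m. 0 < m \<and> m < n \<longrightarrow> \<not> tc_prop s m TYPE('a)"
  shows "\<exists>ds :: ('a \<times> 'a \<times> 'a) list.
              (\<forall>(r, e, u) \<in> set ds. r = e + u \<and> idem e \<and> is_unit_r u \<and> (s \<longrightarrow> e * u = u * e)) \<and>
              n = Lcm (set (map (\<lambda>(r, e, u). uord u) ds))"
proof -
  define T where "T \<equiv> {(r, e, u::'a). r = e + u \<and> idem e \<and> is_unit_r u \<and> u ^ n = 1 \<and> (s \<longrightarrow> e * u = u * e)}"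
  note g = gen_lcm[OF n0 tc mn, folded T_def]
  obtain ds where ds: "set ds \<subseteq> T" "(\<lambda>(r, e, u). uord u) ` set ds = (\<lambda>(r, e, u). uord u) ` T"
    using list_of_image[OF g(1)] by blast
  show ?thesis
  proof (intro exI conjI)
    show "\<forall>(r, e, u) \<in> set ds. r = e + u \<and> idem e \<and> is_unit_r u \<and> (s \<longrightarrow> e * u = u * e)"
      using ds(1) T_def by auto
    show "n = Lcm (set (map (\<lambda>(r, e, u). uord u) ds))" using ds(2) g(2) by simp
  qed
qed

lemma gen_exp:
  assumes n0: "n > 0" and tc: "tc_prop s n TYPE('a::ring_1)"
    and mn: "\<forall>m. 0 < m \<and> m < n \<longrightarrow> \<not> tc_prop s m TYPE('a)"
    and ex: "units_exponent TYPE('a) t"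
  shows "n dvd t"
proof -
  define g where "g = gcd n t"
  have t0: "t > 0" using ex units_exponent_def by blast
  have g0: "g > 0" using n0 g_def by simp
  have "tc_prop s g TYPE('a)"
    unfolding tc_prop_def
  proof
    fix r :: 'a
    obtain e u where h: "idem e" "is_unit_r u" "u ^ n = 1" "r = e + u" "s \<longrightarrow> e * u = u * e"
      using tc unfolding tc_prop_def by blast
    have ut: "u ^ t = 1" using ex h(2) units_exponent_def by blast
    have p: "uord u > 0" using h(3) n0 uord_pos_iff by blast
    have "uord u dvd g" using uord_dvd_iff[OF p] h(3) ut g_def by simp
    hence "u ^ g = 1" using uord_dvd_iff[OF p] by simp
    thus "\<exists>e u. idem e \<and> is_unit_r u \<and> u ^ g = 1 \<and> r = e + u \<and> (s \<longrightarrow> e * u = u * e)"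
      using h by blast
  qed
  hence "\<not> g < n" using mn g0 by blast
  moreover have "g \<le> n" using n0 g_def by (simp add: dvd_imp_le)
  ultimately have "g = n" by simp
  thus ?thesis using g_def by (metis gcd_dvd2)
qed

lemma gen_comm:
  assumes n0: "n > 0" and tc: "tc_prop s n TYPE('a::ring_1)"
    and mn: "\<forall>m. 0 < m \<and> m < n \<longrightarrow> \<not> tc_prop s m TYPE('a)"
    and comm: "\<forall>a b::'a. a * b = b * a"
  shows "\<exists>u::'a. is_unit_r u \<and> uord u = n"
proof -
  define T where "T \<equiv> {(r, e, u::'a). r = e + u \<and> idem e \<and> is_unit_r u \<and> u ^ n = 1 \<and> (s \<longrightarrow> e * u = u * e)}"
  note g = gen_lcm[OF n0 tc mn, folded T_def]
  have "\<forall>d\<in>(\<lambda>(r, e, u). uord u) ` T. d > 0 \<and> (\<exists>x::'a. uord x = d)"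
    using g(3) by auto
  then obtain z :: 'a where z: "uord z = n" using uord_Lcm[OF comm g(1)] g(2) by auto
  hence "z ^ n = 1" using uord_pow n0 by metis
  hence "is_unit_r z" using unit_of_pow n0 by blast
  thus ?thesis using z by blast
qed

theorem lemma1p1:
  fixes n :: nat
  shows "(n_torsion_clean n TYPE('a::ring_1) \<longrightarrow>
           (\<exists>ds :: ('a \<times> 'a \<times> 'a) list.
              (\<forall>(r, e, u) \<in> set ds. r = e + u \<and> idem e \<and> is_unit_r u) \<and>
              n = Lcm (set (map (\<lambda>(r, e, u). uord u) ds))))
       \<and> (strongly_n_torsion_clean n TYPE('a) \<longrightarrow>
           (\<exists>ds :: ('a \<times> 'a \<times> 'a) list.
              (\<forall>(r, e, u) \<in> set ds. r = e + u \<and> idem e \<and> is_unit_r u \<and> e * u = u * e) \<and>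
              n = Lcm (set (map (\<lambda>(r, e, u). uord u) ds))))
       \<and> (n_torsion_clean n TYPE('a) \<or> strongly_n_torsion_clean n TYPE('a) \<longrightarrow>
           (\<forall>s. units_exponent TYPE('a) s \<longrightarrow> n dvd s) \<and>
           ((\<forall>a b :: 'a. a * b = b * a) \<longrightarrow> (\<exists>u :: 'a. is_unit_r u \<and> uord u = n)))"
proof (intro conjI impI)
  assume h: "n_torsion_clean n TYPE('a)"
  show "\<exists>ds :: ('a \<times> 'a \<times> 'a) list.
              (\<forall>(r, e, u) \<in> set ds. r = e + u \<and> idem e \<and> is_unit_r u) \<and>
              n = Lcm (set (map (\<lambda>(r, e, u). uord u) ds))"
    using gen_list[where s=False and n=n and 'a='a] h unfolding n_torsion_clean_def by simp
next
  assume h: "strongly_n_torsion_clean n TYPE('a)"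
  show "\<exists>ds :: ('a \<times> 'a \<times> 'a) list.
              (\<forall>(r, e, u) \<in> set ds. r = e + u \<and> idem e \<and> is_unit_r u \<and> e * u = u * e) \<and>
              n = Lcm (set (map (\<lambda>(r, e, u). uord u) ds))"
    using gen_list[where s=True and n=n and 'a='a] h unfolding strongly_n_torsion_clean_def by simp
next
  assume h: "n_torsion_clean n TYPE('a) \<or> strongly_n_torsion_clean n TYPE('a)"
  then obtain b where b: "n > 0" "tc_prop b n TYPE('a)" "\<forall>m. 0 < m \<and> m < n \<longrightarrow> \<not> tc_prop b m TYPE('a)"
    unfolding n_torsion_clean_def strongly_n_torsion_clean_def by blast
  show "\<forall>s. units_exponent TYPE('a) s \<longrightarrow> n dvd s" using gen_exp[OF b] by blast
next
  assume h: "n_torsion_clean n TYPE('a) \<or> strongly_n_torsion_clean n TYPE('a)"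
     and c: "\<forall>a b :: 'a. a * b = b * a"
  then obtain b where b: "n > 0" "tc_prop b n TYPE('a)" "\<forall>m. 0 < m \<and> m < n \<longrightarrow> \<not> tc_prop b m TYPE('a)"
    unfolding n_torsion_clean_def strongly_n_torsion_clean_def by blast
  show "\<exists>u :: 'a. is_unit_r u \<and> uord u = n"
    using gen_comm[OF b c] by blast
qed

end
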